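(* Let $\varepsilon>0$ and $p\in(0,1]$. Let $G$ be an $n$-vertex graph with $e(G)\geq 2n/\varepsilon$ and let $\mu\in\mathcal{M}_{1,p}(G)$. Then \[\mathbb{P}\left[e(\mathbf{G}_\mu)\leq(1-3\varepsilon)p\,e(G)\right]\leq 4n\exp\left(-\frac{\varepsilon^3 p\, e(G)}{6n}\right).\]
   Context: A random graph model on $G$ is a probability measure $\mu$ on subsets of $E(G)$, and $\mathbf{G}_\mu$ is the random spanning subgraph with edge set distributed according to $\mu$. $\mu$ is $1$-independent if for all sets $A,B\subseteq E(G)$ whose edges span disjoint vertex sets, $E(\mathbf{G}_\mu)\cap A$ and $E(\mathbf{G}_\mu)\cap B$ are independent. $\mathcal{M}_{1,p}(G)$ is the set of $1$-independent measures on $G$ in which each edge is present with probability exactly $p$. *)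

theory Defs
  imports "HOL-Probability.Probability"
begin

definition graph :: "'a set \<Rightarrow> 'a set set \<Rightarrow> bool" where
  "graph V E \<longleftrightarrow> finite V \<and> (\<forall>e\<in>E. e \<subseteq> V \<and> card e = 2)"

text \<open>Since E is finite we use a probability mass function whose support lies in Pow E;
  the random edge set is the outcome S.\<close>
definition random_graph_model :: "'a set set \<Rightarrow> 'a set set pmf \<Rightarrow> bool" where
  "random_graph_model E \<mu> \<longleftrightarrow> set_pmf \<mu> \<subseteq> Pow E"

definition one_independent :: "'a set set \<Rightarrow> 'a set set pmf \<Rightarrow> bool" where
  "one_independent E \<mu> \<longleftrightarrow>
     (\<forall>A B. A \<subseteq> E \<longrightarrow> B \<subseteq> E \<longrightarrow> \<Union>A \<inter> \<Union>B = {} \<longrightarrow>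
        (\<forall>X Y. measure_pmf.prob \<mu> {S. S \<inter> A = X \<and> S \<inter> B = Y}
               = measure_pmf.prob \<mu> {S. S \<inter> A = X} * measure_pmf.prob \<mu> {S. S \<inter> B = Y}))"

definition M1p :: "'a set \<Rightarrow> 'a set set \<Rightarrow> real \<Rightarrow> 'a set set pmf set" where
  "M1p V E p = {\<mu>. random_graph_model E \<mu> \<and> one_independent E \<mu> \<and>
                   (\<forall>e\<in>E. measure_pmf.prob \<mu> {S. e \<in> S} = p)}"

end

theory Submission imports Defs begin


lemma indep_expect:
  fixes \<mu> :: "'b set pmf" and A B :: "'b set" and g h :: "'b set \<Rightarrow> real"
  assumes fin: "finite A" "finite B"
  and ind: "\<And>X Y. measure_pmf.prob \<mu> {S. S \<inter> A = X \<and> S \<inter> B = Y} = measure_pmf.prob \<mu> {S. S \<inter> A = X} * measure_pmf.prob \<mu> {S. S \<inter> B = Y}"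
  shows "measure_pmf.expectation \<mu> (\<lambda>S. g (S\<inter>A) * h (S\<inter>B)) = measure_pmf.expectation \<mu> (\<lambda>S. g (S\<inter>A)) * measure_pmf.expectation \<mu> (\<lambda>S. h (S\<inter>B))"
proof -
  define P where "P = map_pmf (\<lambda>S. S\<inter>A) \<mu>"
  define Q where "Q = map_pmf (\<lambda>S. S\<inter>B) \<mu>"
  have eq: "map_pmf (\<lambda>S. (S\<inter>A, S\<inter>B)) \<mu> = pair_pmf P Q"
  proof (rule pmf_eqI)
    fix z :: "'b set \<times> 'b set" obtain X Y where z: "z = (X,Y)" by force
    have "pmf (map_pmf (\<lambda>S. (S\<inter>A, S\<inter>B)) \<mu>) z = measure_pmf.prob \<mu> {S. S \<inter> A = X \<and> S \<inter> B = Y}"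
      by (simp add: pmf_map z vimage_def)
    also have "\<dots> = measure_pmf.prob \<mu> {S. S \<inter> A = X} * measure_pmf.prob \<mu> {S. S \<inter> B = Y}" by (rule ind)
    also have "\<dots> = pmf (pair_pmf P Q) z" by (simp add: pmf_pair pmf_map z vimage_def P_def Q_def)
    finally show "pmf (map_pmf (\<lambda>S. (S\<inter>A, S\<inter>B)) \<mu>) z = pmf (pair_pmf P Q) z" .
  qed
  have "measure_pmf.expectation \<mu> (\<lambda>S. g (S\<inter>A) * h (S\<inter>B))
      = measure_pmf.expectation (map_pmf (\<lambda>S. (S\<inter>A, S\<inter>B)) \<mu>) (\<lambda>(X,Y). g X * h Y)" by simp
  also have "\<dots> = measure_pmf.expectation (pair_pmf P Q) (\<lambda>(X,Y). g X * h Y)" by (simp only: eq)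
  also have "\<dots> = (\<Sum>z\<in>Pow A \<times> Pow B. (case z of (X,Y) \<Rightarrow> g X * h Y) * pmf (pair_pmf P Q) z)"
    by (rule integral_measure_pmf_real) (auto simp: fin P_def Q_def)
  also have "\<dots> = (\<Sum>X\<in>Pow A. g X * pmf P X) * (\<Sum>Y\<in>Pow B. h Y * pmf Q Y)"
    unfolding sum_product sum.cartesian_product by (rule sum.cong) (clarsimp simp: pmf_pair)+
  also have "(\<Sum>X\<in>Pow A. g X * pmf P X) = measure_pmf.expectation P g"
    by (rule integral_measure_pmf_real[symmetric]) (auto simp: fin P_def)
  also have "(\<Sum>Y\<in>Pow B. h Y * pmf Q Y) = measure_pmf.expectation Q h"
    by (rule integral_measure_pmf_real[symmetric]) (auto simp: fin Q_def)
  finally show ?thesis by (simp add: P_def Q_def)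
qed


lemma single_expect:
  fixes \<mu> :: "'b set pmf"
  shows "measure_pmf.expectation \<mu> (\<lambda>S. exp (-l * real (card (S \<inter> {e})))) = 1 + (exp (-l) - 1) * measure_pmf.prob \<mu> {S. e \<in> S}"
proof -
  have "(\<lambda>S. exp (-l * real (card (S \<inter> {e})))) = (\<lambda>S. 1 + (exp (-l) - 1) * indicator {S. e \<in> S} S)"
    by (auto simp: fun_eq_iff indicator_def)
  moreover have "measure_pmf.expectation \<mu> (\<lambda>S. 1 + (exp (-l) - 1) * indicator {S. e \<in> S} S) = measure_pmf.expectation \<mu> (\<lambda>S. 1) + measure_pmf.expectation \<mu> (\<lambda>S. (exp (-l) - 1) * indicator {S. e \<in> S} S)"
    by (rule Bochner_Integration.integral_add) (auto intro!: integrable_real_indicator simp: measure_pmf.emeasure_finite less_top[symmetric])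
  ultimately show ?thesis by simp
qed

lemma mgf:
  fixes \<mu> :: "'b set set pmf"
  assumes oi: "one_independent E \<mu>" and pe: "\<forall>e\<in>E. measure_pmf.prob \<mu> {S. e \<in> S} = p"
    and "finite M" "M \<subseteq> E" "\<forall>e\<in>M. \<forall>f\<in>M. e \<noteq> f \<longrightarrow> e \<inter> f = {}"
  shows "measure_pmf.expectation \<mu> (\<lambda>S. exp (-l * real (card (S \<inter> M)))) = (1 - p + p * exp (-l)) ^ card M"
  using assms(3-5)
proof (induction M rule: finite_induct)
  case empty
  then show ?case by simp
next
  case (insert e F)
  have spl: "exp (-l * real (card (S \<inter> insert e F))) = exp (-l * real (card (S \<inter> {e}))) * exp (-l * real (card (S \<inter> F)))" for S
  proof -
    have "S \<inter> insert e F = (S \<inter> {e}) \<union> (S \<inter> F)" by auto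
    moreover have "card ((S \<inter> {e}) \<union> (S \<inter> F)) = card (S \<inter> {e}) + card (S \<inter> F)"
      by (rule card_Un_disjoint) (use insert.hyps in auto)
    ultimately show ?thesis by (simp add: exp_add[symmetric] algebra_simps)
  qed
  have disj: "\<Union>{e} \<inter> \<Union>F = {}"
  proof -
    have "e \<inter> f = {}" if "f \<in> F" for f
    proof -
      have "e \<noteq> f" using insert.hyps(2) that by auto
      moreover have "e \<in> insert e F" "f \<in> insert e F" using that by auto
      ultimately show ?thesis using insert.prems(2) by blast
    qed
    then show ?thesis by auto
  qed
  have ind: "measure_pmf.prob \<mu> {S. S \<inter> {e} = X \<and> S \<inter> F = Y} = measure_pmf.prob \<mu> {S. S \<inter> {e} = X} * measure_pmf.prob \<mu> {S. S \<inter> F = Y}" for X Y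
  proof -
    have sub: "{e} \<subseteq> E" "F \<subseteq> E" using insert.prems(1) by auto
    have "\<forall>X Y. measure_pmf.prob \<mu> {S. S \<inter> {e} = X \<and> S \<inter> F = Y} = measure_pmf.prob \<mu> {S. S \<inter> {e} = X} * measure_pmf.prob \<mu> {S. S \<inter> F = Y}"
      using spec[OF spec[OF oi[unfolded one_independent_def], of "{e}"], of F] sub disj by simp
    then show ?thesis by simp
  qed
  have "measure_pmf.expectation \<mu> (\<lambda>S. exp (-l * real (card (S \<inter> insert e F))))
     = measure_pmf.expectation \<mu> (\<lambda>S. exp (-l * real (card (S \<inter> {e}))) * exp (-l * real (card (S \<inter> F))))"
    by (simp only: spl)
  also have "\<dots> = measure_pmf.expectation \<mu> (\<lambda>S. exp (-l * real (card (S \<inter> {e})))) * measure_pmf.expectation \<mu> (\<lambda>S. exp (-l * real (card (S \<inter> F))))"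
    by (rule indep_expect[where g = "\<lambda>X. exp (-l * real (card X))" and h = "\<lambda>X. exp (-l * real (card X))"]) (simp, use insert.hyps in simp, rule ind)
  also have "measure_pmf.expectation \<mu> (\<lambda>S. exp (-l * real (card (S \<inter> {e})))) = 1 - p + p * exp (-l)"
    using single_expect[of \<mu> l e] pe insert.prems by (simp add: algebra_simps)
  also have "measure_pmf.expectation \<mu> (\<lambda>S. exp (-l * real (card (S \<inter> F)))) = (1 - p + p * exp (-l)) ^ card F"
    using insert by auto
  finally show ?case using insert.hyps by simp
qed

lemma exp_neg_bound:
  fixes x :: real assumes "x \<ge> 0"
  shows "exp (-x) \<le> 1 - x + x^2/2"
proof -
  have a: "1 + x + x^2/2 \<le> exp x" using exp_lower_Taylor_quadratic[OF assms] .
  have b: "(1 - x + x^2/2) * (1 + x + x^2/2) = 1 + (x*x)*(x*x)/4" by (simp add: power2_eq_square field_simps)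
  have pos: "1 + x + x^2/2 > 0" using assms by (simp add: add_pos_nonneg)
  have "exp (-x) * (1 + x + x^2/2) \<le> exp (-x) * exp x" using a by simp
  also have "\<dots> = 1" by (simp add: exp_minus)
  also have "1 \<le> (1 - x + x^2/2) * (1 + x + x^2/2)" unfolding b by simp
  finally show ?thesis using pos by (rule mult_right_le_imp_le)
qed

lemma chernoff_matching:
  fixes \<mu> :: "'b set set pmf"
  assumes oi: "one_independent E \<mu>" and pe: "\<forall>e\<in>E. measure_pmf.prob \<mu> {S. e \<in> S} = p"
    and "finite M" "M \<subseteq> E" "\<forall>e\<in>M. \<forall>f\<in>M. e \<noteq> f \<longrightarrow> e \<inter> f = {}"
    and ep: "0 < \<epsilon>" and p: "0 \<le> p" "p \<le> 1"
  shows "measure_pmf.prob \<mu> {S. real (card (S \<inter> M)) \<le> (1 - \<epsilon>) * p * real (card M)} \<le> exp (- (\<epsilon>^2 * p * real (card M) / 2))"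
proof -
  let ?m = "real (card M)"
  have int: "set_integrable (measure_pmf \<mu>) UNIV (\<lambda>S. exp (- \<epsilon> * real (card (S \<inter> M))))"
    unfolding set_integrable_def
    by (rule measure_pmf.integrable_const_bound[where B=1]) (use ep in auto)
  have "measure_pmf.prob \<mu> {S. real (card (S \<inter> M)) \<le> (1 - \<epsilon>) * p * ?m}
      = measure_pmf.prob \<mu> {S \<in> UNIV. real (card (S \<inter> M)) \<le> (1 - \<epsilon>) * p * ?m}" by simp
  also have "\<dots> \<le> exp (\<epsilon> * ((1 - \<epsilon>) * p * ?m)) * (\<integral>S\<in>UNIV. exp (- \<epsilon> * real (card (S \<inter> M))) \<partial>measure_pmf \<mu>)"
    by (rule measure_pmf.Chernoff_ineq_le[OF ep int]) simp
  also have "(\<integral>S\<in>UNIV. exp (- \<epsilon> * real (card (S \<inter> M))) \<partial>measure_pmf \<mu>) = measure_pmf.expectation \<mu> (\<lambda>S. exp (- \<epsilon> * real (card (S \<inter> M))))"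
    by (simp add: set_lebesgue_integral_def)
  also have "\<dots> = (1 - p + p * exp (-\<epsilon>)) ^ card M"
    by (rule mgf[OF oi pe assms(3-5)])
  also have "\<dots> \<le> exp (p * (exp (-\<epsilon>) - 1)) ^ card M"
  proof (rule power_mono)
    show "1 - p + p * exp (- \<epsilon>) \<le> exp (p * (exp (- \<epsilon>) - 1))"
      using exp_ge_add_one_self[of "p * (exp (- \<epsilon>) - 1)"] by (simp add: algebra_simps)
    show "0 \<le> 1 - p + p * exp (- \<epsilon>)" using p by (simp add: add_nonneg_nonneg)
  qed
  also have "\<dots> = exp (?m * (p * (exp (-\<epsilon>) - 1)))" by (simp add: exp_of_nat_mult)
  also have "exp (\<epsilon> * ((1 - \<epsilon>) * p * ?m)) * exp (?m * (p * (exp (-\<epsilon>) - 1)))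
      = exp (p * ?m * (\<epsilon> - \<epsilon>^2 + exp (-\<epsilon>) - 1))"
    by (simp add: exp_add[symmetric] algebra_simps power2_eq_square)
  also have "\<dots> \<le> exp (p * ?m * (-(\<epsilon>^2) / 2))"
  proof -
    have "exp (-\<epsilon>) \<le> 1 - \<epsilon> + \<epsilon>^2/2" using exp_neg_bound[of \<epsilon>] ep by simp
    then have "\<epsilon> - \<epsilon>^2 + exp (-\<epsilon>) - 1 \<le> -(\<epsilon>^2) / 2" by simp
    moreover have "0 \<le> p * ?m" using p by simp
    ultimately show ?thesis by (subst exp_le_cancel_iff) (rule mult_left_mono)
  qed
  finally show ?thesis by (simp add: algebra_simps)
qed


lemma edges_at_vertex:
  assumes "graph V E"
  shows "card {f\<in>E. u \<in> f} \<le> card V"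
proof -
  have fin: "finite V" using assms unfolding graph_def by auto
  have "{f\<in>E. u \<in> f} \<subseteq> (\<lambda>w. {u, w}) ` V"
  proof
    fix f assume f: "f \<in> {f\<in>E. u \<in> f}"
    then have "f \<subseteq> V" "card f = 2" "u \<in> f" using assms unfolding graph_def by auto
    then obtain a b where ab: "f = {a, b}" "a \<noteq> b" by (auto simp: card_2_iff)
    show "f \<in> (\<lambda>w. {u, w}) ` V"
    proof (cases "u = a")
      case True then show ?thesis using ab \<open>f \<subseteq> V\<close> by auto
    next
      case False then have "u = b" using ab \<open>u \<in> f\<close> by auto
      then have "f = {u, a}" using ab by auto
      then show ?thesis using ab \<open>f \<subseteq> V\<close> by auto
    qed
  qed
  then have "card {f\<in>E. u \<in> f} \<le> card ((\<lambda>w. {u, w}) ` V)" by (intro card_mono) (use fin in auto)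
  also have "\<dots> \<le> card V" by (rule card_image_le[OF fin])
  finally show ?thesis .
qed

lemma colouring:
  assumes g: "graph V E" and n: "card V = n" and F: "F \<subseteq> E"
  shows "\<exists>c. (\<forall>e\<in>F. c e < 4*n) \<and> (\<forall>e\<in>F. \<forall>f\<in>F. e \<noteq> f \<and> c e = c f \<longrightarrow> e \<inter> f = {})"
proof -
  have finV: "finite V" using g unfolding graph_def by auto
  have "E \<subseteq> Pow V" using g unfolding graph_def by auto
  then have "finite E" using finV by (meson finite_Pow_iff finite_subset)
  then have "finite F" using F by (rule finite_subset[rotated])
  then show ?thesis using F
  proof (induction F rule: finite_induct)
    case empty
    then show ?case by auto
  next
    case (insert e F)
    then obtain c where c1: "\<forall>e\<in>F. c e < 4*n" and c2: "\<forall>e\<in>F. \<forall>f\<in>F. e \<noteq> f \<and> c e = c f \<longrightarrow> e \<inter> f = {}"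
      by auto
    have "e \<in> E" using insert by auto
    then have "e \<subseteq> V" "card e = 2" using g unfolding graph_def by auto
    then obtain u v where uv: "e = {u, v}" "u \<noteq> v" by (auto simp: card_2_iff)
    have "u \<in> V" using uv \<open>e \<subseteq> V\<close> by auto
    then have n1: "n \<ge> 1" using n finV by (metis One_nat_def Suc_leI card_gt_0_iff empty_iff)
    define Adj where "Adj = {f\<in>F. f \<inter> e \<noteq> {}}"
    have "Adj \<subseteq> {f\<in>E. u \<in> f} \<union> {f\<in>E. v \<in> f}" using insert.prems uv unfolding Adj_def by auto
    moreover have "finite ({f\<in>E. u \<in> f} \<union> {f\<in>E. v \<in> f})" using \<open>finite E\<close> by auto
    ultimately have "card Adj \<le> card ({f\<in>E. u \<in> f} \<union> {f\<in>E. v \<in> f})" by (rule card_mono[rotated])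
    also have "\<dots> \<le> card {f\<in>E. u \<in> f} + card {f\<in>E. v \<in> f}" by (rule card_Un_le)
    also have "\<dots> \<le> 2 * n" using edges_at_vertex[OF g, of u] edges_at_vertex[OF g, of v] n by simp
    finally have cA: "card Adj \<le> 2 * n" .
    have "card (c ` Adj) < card {..<4*n}" using card_image_le[of Adj c] cA n1 insert.hyps(1)
      unfolding Adj_def by auto
    moreover have "finite (c ` Adj)" using insert.hyps(1) unfolding Adj_def by auto
    ultimately have "\<not> {..<4*n} \<subseteq> c ` Adj" using card_mono not_le by blast
    then obtain k where k: "k < 4*n" "k \<notin> c ` Adj" by auto
    define c' where "c' = c(e := k)"
    have "\<forall>x\<in>insert e F. c' x < 4*n" using c1 k unfolding c'_def by auto
    moreover have "\<forall>x\<in>insert e F. \<forall>y\<in>insert e F. x \<noteq> y \<and> c' x = c' y \<longrightarrow> x \<inter> y = {}"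
    proof (intro ballI impI)
      fix x y assume xy: "x \<in> insert e F" "y \<in> insert e F" "x \<noteq> y \<and> c' x = c' y"
      show "x \<inter> y = {}"
      proof (cases "x = e")
        case True
        have "y \<noteq> e" using xy True by auto
        then have "y \<in> F" "c y = k" using xy True insert.hyps(2) unfolding c'_def by auto
        then show ?thesis using k True unfolding Adj_def by blast
      next
        case False
        show ?thesis
        proof (cases "y = e")
          case True
          then have "x \<in> F" "c x = k" using xy False insert.hyps(2) unfolding c'_def by (auto split: if_splits)
          then show ?thesis using k True unfolding Adj_def by blast
        next
          case False2: False
          then have "x \<in> F" "y \<in> F" "c x = c y" using xy False insert.hyps(2) unfolding c'_def by auto
          then show ?thesis using c2 xy by blast
        qed
      qed
    qed
    ultimately show ?case by blast
  qed
qed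


theorem lemma22:
  fixes V :: "'a set" and E :: "'a set set" and \<epsilon> p :: real and n :: nat
    and \<mu> :: "'a set set pmf"
  assumes "\<epsilon> > 0" and "0 < p" and "p \<le> 1"
    and "graph V E" and "V \<noteq> {}" and "card V = n"
    and "real (card E) \<ge> 2 * real n / \<epsilon>"
    and "\<mu> \<in> M1p V E p"
  shows "measure_pmf.prob \<mu> {S. real (card S) \<le> (1 - 3 * \<epsilon>) * p * real (card E)}
           \<le> 4 * real n * exp (- (\<epsilon> ^ 3 * p * real (card E)) / (6 * real n))"
proof -
  note ep = assms(1) and pp = assms(2) and p1 = assms(3) and g = assms(4)
  from assms(8) have rgm: "random_graph_model E \<mu>" and oi: "one_independent E \<mu>"
    and pe: "\<forall>e\<in>E. measure_pmf.prob \<mu> {S. e \<in> S} = p" unfolding M1p_def by auto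
  have finV: "finite V" using g unfolding graph_def by auto
  have "E \<subseteq> Pow V" using g unfolding graph_def by auto
  then have finE: "finite E" using finV by (meson finite_Pow_iff finite_subset)
  have n1: "n \<ge> 1" using assms(5,6) finV by (metis One_nat_def Suc_leI card_gt_0_iff)
  then have npos: "real n > 0" by simp
  let ?e = "real (card E)"
  have "2 * real n / \<epsilon> > 0" using npos ep by simp
  then have epos: "?e > 0" using assms(7) by linarith
  show ?thesis
  proof (cases "\<epsilon> > 1/3")
    case True
    have "(1 - 3 * \<epsilon>) * p < 0" using True pp by (simp add: mult_neg_pos)
    then have "(1 - 3 * \<epsilon>) * p * ?e < 0" using epos by (simp add: mult_neg_pos)
    then have emp: "{S. real (card S) \<le> (1 - 3 * \<epsilon>) * p * ?e} = {}" by (auto simp: not_le)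
    show ?thesis unfolding emp by simp
  next
    case False
    then have e3: "\<epsilon> \<le> 1/3" by simp
    from colouring[OF g assms(6) order_refl] obtain c where
      cc: "(\<forall>e\<in>E. c e < 4*n) \<and> (\<forall>e\<in>E. \<forall>f\<in>E. e \<noteq> f \<and> c e = c f \<longrightarrow> e \<inter> f = {})"
      by (rule exE)
    have c1: "\<forall>e\<in>E. c e < 4*n" using cc by (rule conjunct1)
    have c2: "\<forall>e\<in>E. \<forall>f\<in>E. e \<noteq> f \<and> c e = c f \<longrightarrow> e \<inter> f = {}" using cc by (rule conjunct2)
    define K where "K = 4*n"
    define M where "M i = {e\<in>E. c e = i}" for i
    define t where "t = \<epsilon> * ?e / (2 * real n)"
    define L where "L = {i\<in>{..<K}. t \<le> real (card (M i))}"
    define B where "B i = {S. real (card (S \<inter> M i)) \<le> (1 - \<epsilon>) * p * real (card (M i))}" for i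
    have Msub: "M i \<subseteq> E" for i unfolding M_def by auto
    have Mfin: "finite (M i)" for i using Msub finE by (rule finite_subset)
    have Mmatch: "\<forall>e\<in>M i. \<forall>f\<in>M i. e \<noteq> f \<longrightarrow> e \<inter> f = {}" for i using c2 unfolding M_def by auto
    have Mdisj: "\<forall>i\<in>{..<K}. \<forall>j\<in>{..<K}. i \<noteq> j \<longrightarrow> M i \<inter> M j = {}" unfolding M_def by auto
    have EU: "E = (\<Union>i\<in>{..<K}. M i)" using c1 by (auto simp: M_def K_def)
    have cardE: "card E = (\<Sum>i<K. card (M i))"
      by (subst EU, rule card_UN_disjoint) (use Mfin Mdisj in auto)
    have tpos: "t \<ge> 0" unfolding t_def using ep epos npos by simp
    have Kt: "real K * t = 2 * \<epsilon> * ?e" unfolding K_def t_def using npos by (simp add: field_simps)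
    have key: "(1 - 3 * \<epsilon>) * p * ?e < real (card S)" if SE: "S \<subseteq> E" and nb: "S \<notin> (\<Union>i\<in>L. B i)" for S
    proof -
      have SU: "S = (\<Union>i\<in>{..<K}. S \<inter> M i)" using EU SE by blast
      have cS: "card S = (\<Sum>i<K. card (S \<inter> M i))"
        by (subst SU, rule card_UN_disjoint) (use Mfin Mdisj in auto)
      have big: "(1 - \<epsilon>) * p * real (card (M i)) < real (card (S \<inter> M i))" if "i \<in> L" for i
        using nb that unfolding B_def by auto
      have "(\<Sum>i\<in>L. real (card (S \<inter> M i))) \<le> (\<Sum>i<K. real (card (S \<inter> M i)))"
        by (rule sum_mono2) (auto simp: L_def)
      also have "\<dots> = real (card S)" using cS by simp
      finally have s1: "(\<Sum>i\<in>L. real (card (S \<inter> M i))) \<le> real (card S)" .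
      have s2: "(\<Sum>i\<in>L. (1 - \<epsilon>) * p * real (card (M i))) \<le> (\<Sum>i\<in>L. real (card (S \<inter> M i)))"
        by (rule sum_mono) (use big in force)
      have s3: "(\<Sum>i\<in>L. (1 - \<epsilon>) * p * real (card (M i))) = (1 - \<epsilon>) * p * (\<Sum>i\<in>L. real (card (M i)))"
        by (simp add: sum_distrib_left)
      have "(\<Sum>i\<in>{..<K}-L. real (card (M i))) \<le> (\<Sum>i\<in>{..<K}-L. t)"
        by (rule sum_mono) (auto simp: L_def)
      also have "\<dots> = real (card ({..<K}-L)) * t" by simp
      also have "\<dots> \<le> real K * t"
        using tpos card_mono[of "{..<K}" "{..<K} - L"] by (intro mult_right_mono) auto
      finally have small: "(\<Sum>i\<in>{..<K}-L. real (card (M i))) \<le> 2 * \<epsilon> * ?e" using Kt by simp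
      have "?e = (\<Sum>i<K. real (card (M i)))" using cardE by simp
      also have "\<dots> = (\<Sum>i\<in>L. real (card (M i))) + (\<Sum>i\<in>{..<K}-L. real (card (M i)))"
        by (subst sum.subset_diff[of L "{..<K}"]) (auto simp: L_def)
      finally have s4: "(1 - 2 * \<epsilon>) * ?e \<le> (\<Sum>i\<in>L. real (card (M i)))" using small by (simp add: algebra_simps)
      have c0: "0 \<le> (1 - \<epsilon>) * p" using e3 pp by simp
      have s5: "(1 - \<epsilon>) * p * ((1 - 2 * \<epsilon>) * ?e) \<le> (1 - \<epsilon>) * p * (\<Sum>i\<in>L. real (card (M i)))"
        by (rule mult_left_mono[OF s4 c0])
      have s6: "(1 - \<epsilon>) * p * ((1 - 2 * \<epsilon>) * ?e) = (1 - 3 * \<epsilon>) * p * ?e + 2 * (\<epsilon> * \<epsilon> * p * ?e)"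
        by (simp add: algebra_simps)
      have s7: "0 < \<epsilon> * \<epsilon> * p * ?e" using ep pp epos by simp
      show ?thesis using s1 s2 s3 s5 s6 s7 by linarith
    qed
    have sub: "{S. real (card S) \<le> (1 - 3 * \<epsilon>) * p * ?e} \<inter> set_pmf \<mu> \<subseteq> (\<Union>i\<in>L. B i)"
    proof
      fix S assume S: "S \<in> {S. real (card S) \<le> (1 - 3 * \<epsilon>) * p * ?e} \<inter> set_pmf \<mu>"
      then have "S \<subseteq> E" using rgm unfolding random_graph_model_def by auto
      then show "S \<in> (\<Union>i\<in>L. B i)" using key[of S] S by force
    qed
    have finL: "finite L" unfolding L_def by auto
    have "measure_pmf.prob \<mu> {S. real (card S) \<le> (1 - 3 * \<epsilon>) * p * ?e}
        = measure_pmf.prob \<mu> ({S. real (card S) \<le> (1 - 3 * \<epsilon>) * p * ?e} \<inter> set_pmf \<mu>)"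
      by (simp add: measure_Int_set_pmf)
    also have "\<dots> \<le> measure_pmf.prob \<mu> (\<Union>i\<in>L. B i)"
      by (rule measure_pmf.finite_measure_mono[OF sub]) simp
    also have "\<dots> \<le> (\<Sum>i\<in>L. measure_pmf.prob \<mu> (B i))"
      by (rule measure_pmf.finite_measure_subadditive_finite[OF finL]) simp
    also have "\<dots> \<le> (\<Sum>i\<in>L. exp (- (\<epsilon>^2 * p * t / 2)))"
    proof (rule sum_mono)
      fix i assume i: "i \<in> L"
      have "measure_pmf.prob \<mu> (B i) \<le> exp (- (\<epsilon>^2 * p * real (card (M i)) / 2))"
        unfolding B_def by (rule chernoff_matching[OF oi pe Mfin Msub Mmatch ep]) (use pp p1 in auto)
      also have "\<dots> \<le> exp (- (\<epsilon>^2 * p * t / 2))"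
      proof -
        have "t \<le> real (card (M i))" using i unfolding L_def by auto
        then have "\<epsilon>^2 * p * t \<le> \<epsilon>^2 * p * real (card (M i))"
          using pp by (intro mult_left_mono) auto
        then show ?thesis by simp
      qed
      finally show "measure_pmf.prob \<mu> (B i) \<le> exp (- (\<epsilon>^2 * p * t / 2))" .
    qed
    also have "\<dots> = real (card L) * exp (- (\<epsilon>^2 * p * t / 2))" by simp
    also have "\<dots> \<le> real K * exp (- (\<epsilon>^2 * p * t / 2))"
      by (rule mult_right_mono) (auto simp: L_def intro: card_mono order.trans[OF card_mono[of "{..<K}"]])
    also have "\<dots> \<le> 4 * real n * exp (- (\<epsilon> ^ 3 * p * ?e) / (6 * real n))"
    proof -
      have "\<epsilon>^2 * p * t / 2 = \<epsilon>^3 * p * ?e / (4 * real n)" unfolding t_def using npos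
        by (simp add: field_simps power2_eq_square power3_eq_cube)
      moreover have "\<epsilon>^3 * p * ?e / (6 * real n) \<le> \<epsilon>^3 * p * ?e / (4 * real n)"
        using npos ep pp epos by (intro divide_left_mono) auto
      ultimately have "- (\<epsilon>^2 * p * t / 2) \<le> - (\<epsilon> ^ 3 * p * ?e / (6 * real n))" by linarith
      then have ex: "exp (- (\<epsilon>^2 * p * t / 2)) \<le> exp (- (\<epsilon> ^ 3 * p * ?e / (6 * real n)))"
        by (subst exp_le_cancel_iff)
      show ?thesis unfolding K_def using mult_left_mono[OF ex, of "4 * real n"] by simp
    qed
    finally show ?thesis .
  qed
qed

end
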